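(* Let $(\mathbb{K},|\cdot|)$ be an algebraically closed normed field, $f\in\mathbb{K}[z]$ a polynomial of degree $n\ge2$, $\xi\in\mathbb{K}^n$ a root-vector of $f$, $N\ge1$ and $1\le p\le\infty$. Suppose $x^{(0)}\in\mathbb{K}^n$ has pairwise distinct components and \[ \Psi(E(x^{(0)}))\le 2 . \] Then $f$ has only simple zeros, and the $N$th Weierstrass-type iteration $x^{(k+1)}=T^{(N)}(x^{(k)})$ is well-defined and converges to $\xi$ with error estimates \[ \|x^{(k+1)}-\xi\|\preceq\theta\,\lambda^{(N+1)^k}\|x^{(k)}-\xi\|,\qquad \|x^{(k)}-\xi\|\preceq\theta^k\lambda^{((N+1)^k-1)/N}\|x^{(0)}-\xi\| \] for all $k\ge0$, where $\lambda=\phi_N(E(x^{(0)}))$ and $\theta=\psi_N(E(x^{(0)}))$. Moreover, if $\Psi(E(x^{(0)}))<2$, then the iteration converges to $\xi$ with order of convergence $N+1$.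
   Context: $a_0$ is the leading coefficient of $f$. For $1\le p\le\infty$, $\|x\|_p=(\sum_i|x_i|^p)^{1/p}$ (max-norm if $p=\infty$). For $x\in\mathbb{K}^n$, $\|x\|=(|x_1|,\dots,|x_n|)\in\mathbb{R}^n$ and $\preceq$ is the coordinatewise order on $\mathbb{R}^n$. $d(x)=(d_1(x),\dots,d_n(x))$, $d_i(x)=\min_{j\ne i}|x_i-x_j|$; for $x\in\mathbb{K}^n$, $y\in\mathbb{R}^n$ with nonzero components, $x/y=(|x_1|/y_1,\dots,|x_n|/y_n)$. A root-vector of $f$ is $\xi\in\mathbb{K}^n$ with $f(z)=a_0\prod_{i}(z-\xi_i)$ for all $z$. $E(x)=\|(x-\xi)/d(x)\|_p$. Weierstrass-type maps: $T^{(0)}(x)=x$ on $D_0=\mathbb{K}^n$; $D_{N+1}=\{x\in D_N: x_i\ne T^{(N)}_j(x)\ \forall i\ne j\}$, and for $x\in D_{N+1}$, $T^{(N+1)}_i(x)=x_i-\dfrac{f(x_i)}{a_0\prod_{j\ne i}(x_i-T^{(N)}_j(x))}$. The iteration is well-defined if $x^{(k)}\in D_N$ for all $k$. Real functions: $\omega(t)=\left(1+\frac{t}{(n-1)^{1/p}}\right)^{n-1}$ (with $(n-1)^{1/p}=1$ if $p=\infty$), $\Psi(t)=(1+2t)\omega(t)$ for $t\ge0$; $R$ is the unique positive solution of $\Psi(t)=2$. On $[0,R]$: $\phi_0\equiv1$, and recursively $\omega_N(t)=\left(1+\frac{t\phi_N(t)}{(n-1)^{1/p}}\right)^{n-1}$,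 $\phi_{N+1}(t)=\dfrac{\omega_N(t)-1}{1-2t\omega_N(t)}$ (well-defined, nondecreasing, with values in $[0,1]$); for $N\ge1$, $\psi_N(t)=1-2t\,\omega_{N-1}(t)$. *)

theory Defs
  imports "HOL-Analysis.Analysis" "HOL-Computational_Algebra.Polynomial"
begin

definition is_abs_value :: "('a::field \<Rightarrow> real) \<Rightarrow> bool" where
  "is_abs_value av \<longleftrightarrow>
     (\<forall>x. av x \<ge> 0) \<and> (\<forall>x. av x = 0 \<longleftrightarrow> x = 0) \<and>
     (\<forall>x y. av (x * y) = av x * av y) \<and> (\<forall>x y. av (x + y) \<le> av x + av y)"

(* Vectors in K^n are functions nat => K, only indices i < n matter. *)

definition pnorm :: "ereal \<Rightarrow> nat \<Rightarrow> (nat \<Rightarrow> real) \<Rightarrow> real" where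
  "pnorm p n v = (if p = \<infinity> then Max ({\<bar>v i\<bar> | i. i < n} \<union> {0})
                 else (\<Sum>i<n. \<bar>v i\<bar> powr real_of_ereal p) powr (1 / real_of_ereal p))"

definition rootp :: "ereal \<Rightarrow> nat \<Rightarrow> real" where
  "rootp p n = (if p = \<infinity> then 1 else real (n - 1) powr (1 / real_of_ereal p))"

definition root_vector :: "'a::field poly \<Rightarrow> nat \<Rightarrow> (nat \<Rightarrow> 'a) \<Rightarrow> bool" where
  "root_vector f n \<xi> \<longleftrightarrow> (\<forall>z. poly f z = lead_coeff f * (\<Prod>i<n. z - \<xi> i))"

definition dvec :: "('a::ab_group_add \<Rightarrow> real) \<Rightarrow> nat \<Rightarrow> (nat \<Rightarrow> 'a) \<Rightarrow> nat \<Rightarrow> real" where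
  "dvec av n x i = Min {av (x i - x j) | j. j < n \<and> j \<noteq> i}"

definition Efun :: "('a::field \<Rightarrow> real) \<Rightarrow> ereal \<Rightarrow> nat \<Rightarrow> (nat \<Rightarrow> 'a) \<Rightarrow> (nat \<Rightarrow> 'a) \<Rightarrow> real" where
  "Efun av p n \<xi> x = pnorm p n (\<lambda>i. av (x i - \<xi> i) / dvec av n x i)"

definition omega :: "ereal \<Rightarrow> nat \<Rightarrow> real \<Rightarrow> real" where
  "omega p n t = (1 + t / rootp p n) ^ (n - 1)"

definition Psi :: "ereal \<Rightarrow> nat \<Rightarrow> real \<Rightarrow> real" where
  "Psi p n t = (1 + 2 * t) * omega p n t"

fun phiN :: "ereal \<Rightarrow> nat \<Rightarrow> nat \<Rightarrow> real \<Rightarrow> real" where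
  "phiN p n 0 t = 1"
| "phiN p n (Suc N) t =
     (let w = (1 + t * phiN p n N t / rootp p n) ^ (n - 1) in (w - 1) / (1 - 2 * t * w))"

definition omegaN :: "ereal \<Rightarrow> nat \<Rightarrow> nat \<Rightarrow> real \<Rightarrow> real" where
  "omegaN p n N t = (1 + t * phiN p n N t / rootp p n) ^ (n - 1)"

definition psiN :: "ereal \<Rightarrow> nat \<Rightarrow> nat \<Rightarrow> real \<Rightarrow> real" where
  "psiN p n N t = 1 - 2 * t * omegaN p n (N - 1) t"

fun TW :: "'a::field poly \<Rightarrow> nat \<Rightarrow> nat \<Rightarrow> (nat \<Rightarrow> 'a) \<Rightarrow> (nat \<Rightarrow> 'a)" where
  "TW f n 0 x = x"
| "TW f n (Suc N) x =
     (\<lambda>i. x i - poly f (x i) / (lead_coeff f * (\<Prod>j\<in>{..<n} - {i}. x i - TW f n N x j)))"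

fun DW :: "'a::field poly \<Rightarrow> nat \<Rightarrow> nat \<Rightarrow> (nat \<Rightarrow> 'a) set" where
  "DW f n 0 = UNIV"
| "DW f n (Suc N) = {x \<in> DW f n N. \<forall>i<n. \<forall>j<n. i \<noteq> j \<longrightarrow> x i \<noteq> TW f n N x j}"

definition conv_av :: "('a \<Rightarrow> real) \<Rightarrow> nat \<Rightarrow> (nat \<Rightarrow> nat \<Rightarrow> 'a::ab_group_add) \<Rightarrow> (nat \<Rightarrow> 'a) \<Rightarrow> bool" where
  "conv_av av n xs \<xi> \<longleftrightarrow> (\<forall>i<n. \<forall>e>0. \<exists>K. \<forall>k\<ge>K. av (xs k i - \<xi> i) < e)"

definition errmax :: "('a \<Rightarrow> real) \<Rightarrow> nat \<Rightarrow> (nat \<Rightarrow> 'a::ab_group_add) \<Rightarrow> (nat \<Rightarrow> 'a) \<Rightarrow> real" where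
  "errmax av n x \<xi> = Max ({av (x i - \<xi> i) | i. i < n} \<union> {0})"

definition conv_order :: "('a \<Rightarrow> real) \<Rightarrow> nat \<Rightarrow> (nat \<Rightarrow> nat \<Rightarrow> 'a::ab_group_add) \<Rightarrow> (nat \<Rightarrow> 'a) \<Rightarrow> nat \<Rightarrow> bool" where
  "conv_order av n xs \<xi> r \<longleftrightarrow> conv_av av n xs \<xi> \<and>
     (\<exists>C\<ge>0. \<forall>k. errmax av n (xs (Suc k)) \<xi> \<le> C * errmax av n (xs k) \<xi> ^ r)"

end

theory Submission
  imports Defs
begin


section \<open>Absolute values\<close>

context
  fixes av :: "'a::field \<Rightarrow> real"
  assumes av: "is_abs_value av"
begin

lemma av_nonneg: "av x \<ge> 0" and av_zero[simp]: "av x = 0 \<longleftrightarrow> x = 0"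
    and av_mult: "av (x * y) = av x * av y" and av_tri: "av (x + y) \<le> av x + av y"
  using av unfolding is_abs_value_def by auto

lemma av_0[simp]: "av 0 = 0" by simp

lemma av_pos: "x \<noteq> 0 \<Longrightarrow> av x > 0"
  using av_nonneg[of x] av_zero[of x] by linarith

lemma av_one[simp]: "av 1 = 1"
proof -
  have "av 1 = av 1 * av 1" using av_mult[of 1 1] by simp
  moreover have "av 1 \<noteq> 0" by simp
  ultimately show ?thesis by (metis mult_cancel_left1)
qed

lemma av_minus_one: "av (-1) = 1"
proof -
  have "av (-1) * av (-1) = 1" using av_mult[of "-1" "-1"] by simp
  moreover have "av (-1) \<ge> 0" by (rule av_nonneg)
  ultimately show ?thesis
    by (metis abs_of_nonneg mult_eq_1 order_less_le zero_less_one abs_mult_self_eq mult_cancel_right1 mult_cancel_left1 power2_eq_square power2_eq_1_iff abs_minus_cancel abs_one)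
qed

lemma av_uminus: "av (- x) = av x"
  using av_mult[of "-1" x] av_minus_one by simp

lemma av_commute: "av (x - y) = av (y - x)"
  using av_uminus[of "x - y"] by simp

lemma av_divide: "av (x / y) = av x / av y"
proof (cases "y = 0")
  case True then show ?thesis by simp
next
  case False
  have "av (x / y) * av y = av x" using av_mult[of "x/y" y] False by simp
  then show ?thesis using av_pos[OF False] by (metis nonzero_mult_div_cancel_right order_less_irrefl)
qed

lemma av_prod: "av (prod g A) = prod (\<lambda>i. av (g i)) A"
  by (induction A rule: infinite_finite_induct) (auto simp: av_mult)

lemma av_diff_tri: "av (x - z) \<le> av (x - y) + av (y - z)"
  using av_tri[of "x - y" "y - z"] by simp

lemma av_rev_tri: "av x - av y \<le> av (x - y)"
  using av_tri[of "x - y" y] by simp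

lemma av_prod_minus_one:
  assumes "finite S" "\<And>j. j \<in> S \<Longrightarrow> av (z j - 1) \<le> r j"
  shows "av (1 - prod z S) \<le> prod (\<lambda>j. 1 + r j) S - 1"
  using assms
proof (induction S rule: finite_induct)
  case empty then show ?case by simp
next
  case (insert a S)
  let ?P = "prod z S" and ?R = "prod (\<lambda>j. 1 + r j) S"
  have IH: "av (1 - ?P) \<le> ?R - 1" using insert by auto
  have ra: "av (z a - 1) \<le> r a" using insert by auto
  have "r a \<ge> 0" using ra av_nonneg[of "z a - 1"] by linarith
  have "av ?P \<le> av 1 + av (?P - 1)" using av_tri[of 1 "?P - 1"] by simp
  also have "av (?P - 1) = av (1 - ?P)" by (rule av_commute)
  finally have PR: "av ?P \<le> ?R" using IH by simp
  have "1 - z a * ?P = (1 - ?P) + ?P * (1 - z a)" by (simp add: algebra_simps)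
  hence "av (1 - z a * ?P) \<le> av (1 - ?P) + av ?P * av (1 - z a)"
    using av_tri av_mult by metis
  also have "av (1 - z a) = av (z a - 1)" by (rule av_commute)
  also have "av (1 - ?P) + av ?P * av (z a - 1) \<le> (?R - 1) + ?R * r a"
    using IH PR ra av_nonneg[of "prod z S"] av_nonneg[of "z a - 1"] \<open>r a \<ge> 0\<close> by (intro add_mono mult_mono) auto
  finally show ?case using insert by (simp add: algebra_simps)
qed

end




section \<open>Real functions\<close>

lemma hconv:
  fixes a l :: real
  assumes "a \<ge> 0" "0 \<le> l" "l \<le> 1"
  shows "(1 + l * a) ^ m - 1 \<le> l * ((1 + a) ^ m - 1)"
proof (induction m)
  case 0 then show ?case by simp
next
  case (Suc m)
  let ?X = "(1 + a) ^ m"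
  have X1: "?X \<ge> 1" using assms by simp
  have b: "(1 + l * a) ^ m \<le> 1 + l * (?X - 1)" using Suc by simp
  have p: "0 \<le> 1 + l * a" using assms by simp
  have "(1 + l * a) ^ Suc m = (1 + l * a) * (1 + l * a) ^ m" by simp
  also have "\<dots> \<le> (1 + l * a) * (1 + l * (?X - 1))" using b p by (rule mult_left_mono)
  also have "\<dots> \<le> 1 + l * ((1 + a) ^ Suc m - 1)"
  proof -
    have "0 \<le> l * a * (?X - 1) * (1 - l)" using assms X1 by simp
    then show ?thesis by (simp add: algebra_simps)
  qed
  finally show ?case by simp
qed

lemma rootp_pos: assumes "n \<ge> 2" shows "rootp p n > 0"
  using assms by (auto simp: rootp_def)

lemma phi_Suc: "phiN p n (Suc M) t = (omegaN p n M t - 1) / (1 - 2 * t * omegaN p n M t)"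
  by (simp add: omegaN_def Let_def)

declare phiN.simps(2)[simp del]

lemma omega_eq: "omega p n t = omegaN p n 0 t"
  by (simp add: omega_def omegaN_def)

context
  fixes p :: ereal and n :: nat
  assumes n2: "n \<ge> 2"
begin

abbreviation "cc \<equiv> rootp p n"

lemma cc_pos: "cc > 0" using rootp_pos[OF n2] .

lemma omega_ge1: "t \<ge> 0 \<Longrightarrow> omega p n t \<ge> 1"
  using cc_pos by (simp add: omega_def)

lemma omega_gt1: "t > 0 \<Longrightarrow> omega p n t > 1"
proof -
  assume "t > 0"
  hence "1 < 1 + t / cc" using cc_pos by simp
  moreover have "0 < n - 1" using n2 by simp
  ultimately show ?thesis unfolding omega_def by (rule one_less_power)
qed

lemma omega_mono: "0 \<le> s \<Longrightarrow> s \<le> t \<Longrightarrow> omega p n s \<le> omega p n t"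
  unfolding omega_def using cc_pos
  by (intro power_mono) (auto simp: divide_right_mono)

lemma Psi_mono: "0 \<le> s \<Longrightarrow> s \<le> t \<Longrightarrow> Psi p n s \<le> Psi p n t"
  unfolding Psi_def using omega_mono[of s t] omega_ge1[of s]
  by (intro mult_mono) auto

lemma R1: assumes "t \<ge> 0" "Psi p n t \<le> 2" shows "2 * t * omega p n t < 1"
proof (cases "t = 0")
  case True then show ?thesis by simp
next
  case False
  hence "omega p n t > 1" using assms omega_gt1 by simp
  then show ?thesis using assms(2) unfolding Psi_def by (simp add: algebra_simps)
qed

lemma R2:
  assumes t0: "t \<ge> 0" and P: "Psi p n t \<le> 2"
  shows "0 \<le> phiN p n M t \<and> phiN p n M t \<le> 1 \<and> 1 \<le> omegaN p n M t
     \<and> omegaN p n M t \<le> omega p n t \<and> 2 * t * omegaN p n M t < 1"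
proof (induction M)
  case 0
  then show ?case using R1[OF t0 P] omega_ge1[OF t0] by (simp add: omega_eq)
next
  case (Suc M)
  let ?W = "omegaN p n M t" and ?w = "omega p n t"
  have W: "1 \<le> ?W" "?W \<le> ?w" "2 * t * ?W < 1" using Suc by auto
  have a: "2 * t * ?W \<le> 2 * t * ?w" using W t0 by (simp add: mult_left_mono)
  have b: "?w - 1 \<le> 1 - 2 * t * ?w" using P unfolding Psi_def by (simp add: algebra_simps)
  have ph0: "0 \<le> phiN p n (Suc M) t" using W by (simp add: phi_Suc)
  have ph1: "phiN p n (Suc M) t \<le> 1" using W a b by (simp add: phi_Suc divide_le_eq_1)
  have base0: "0 \<le> 1 + t * phiN p n (Suc M) t / cc" using cc_pos t0 ph0 by simp
  have base1: "1 + t * phiN p n (Suc M) t / cc \<le> 1 + t / cc"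
    using cc_pos t0 ph1 by (simp add: divide_right_mono mult_left_le)
  have W1: "1 \<le> omegaN p n (Suc M) t" unfolding omegaN_def using cc_pos t0 ph0 by simp
  have W2: "omegaN p n (Suc M) t \<le> ?w" unfolding omegaN_def omega_def
    using base1 base0 by (rule power_mono)
  have W3: "2 * t * omegaN p n (Suc M) t < 1"
    using R1[OF t0 P] W2 t0 mult_left_mono[OF W2, of "2*t"] by simp
  show ?case using ph0 ph1 W1 W2 W3 by simp
qed

lemma R3:
  assumes s0: "0 \<le> s" and m0: "0 \<le> mu" and m1: "mu \<le> 1" and smu: "s \<le> mu * t"
    and t0: "0 \<le> t" and P: "Psi p n t \<le> 2"
  shows "omegaN p n M s - 1 \<le> mu ^ Suc M * (omegaN p n M t - 1)"
proof (induction M)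
  case 0
  have "s / cc \<le> mu * (t / cc)" using smu cc_pos by (simp add: divide_right_mono)
  hence "(1 + s / cc) ^ (n - 1) \<le> (1 + mu * (t / cc)) ^ (n - 1)"
    using s0 cc_pos by (intro power_mono) auto
  also have "\<dots> - 1 \<le> mu * ((1 + t / cc) ^ (n - 1) - 1)"
    using hconv[of "t / cc" mu "n - 1"] t0 cc_pos m0 m1 by simp
  finally show ?case by (simp add: omegaN_def)
next
  case (Suc M)
  have st: "s \<le> t" using smu m1 t0 mult_right_mono[OF m1 t0] by simp
  have Ps: "Psi p n s \<le> 2" using Psi_mono[OF s0 st] P by simp
  let ?Ws = "omegaN p n M s" and ?Wt = "omegaN p n M t"
  have Rt: "1 \<le> ?Wt" "2 * t * ?Wt < 1" using R2[OF t0 P, of M] by auto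
  have Rs: "1 \<le> ?Ws" using R2[OF s0 Ps, of M] by auto
  have mM: "mu ^ Suc M \<le> 1" "0 \<le> mu ^ Suc M" using power_le_one[OF m0 m1, of "Suc M"] m0 by (auto simp del: power_Suc)
  have IH: "?Ws - 1 \<le> mu ^ Suc M * (?Wt - 1)" by (rule Suc)
  have "mu ^ Suc M * (?Wt - 1) \<le> ?Wt - 1" using mM Rt by (simp add: mult_left_le_one_le)
  hence WW: "?Ws \<le> ?Wt" using IH by simp
  have "2 * s * ?Ws \<le> 2 * t * ?Wt" using WW st s0 Rs by (intro mult_mono) auto
  hence den: "1 - 2 * t * ?Wt \<le> 1 - 2 * s * ?Ws" "0 < 1 - 2 * t * ?Wt" using Rt by auto
  have phs: "phiN p n (Suc M) s \<le> mu ^ Suc M * phiN p n (Suc M) t"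
  proof -
    have "phiN p n (Suc M) s = (?Ws - 1) / (1 - 2 * s * ?Ws)" by (rule phi_Suc)
    also have "\<dots> \<le> (mu ^ Suc M * (?Wt - 1)) / (1 - 2 * t * ?Wt)"
      using IH den Rs by (intro frac_le) auto
    also have "\<dots> = mu ^ Suc M * phiN p n (Suc M) t" by (simp add: phi_Suc)
    finally show ?thesis .
  qed
  have phs0: "0 \<le> phiN p n (Suc M) s" using R2[OF s0 Ps] by auto
  have pht0: "0 \<le> phiN p n (Suc M) t" using R2[OF t0 P] by auto
  have "s * phiN p n (Suc M) s \<le> (mu * t) * (mu ^ Suc M * phiN p n (Suc M) t)"
    using smu phs s0 phs0 by (intro mult_mono) auto
  also have "\<dots> = mu ^ Suc (Suc M) * (t * phiN p n (Suc M) t)" by (simp add: algebra_simps)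
  finally have g: "s * phiN p n (Suc M) s \<le> mu ^ Suc (Suc M) * (t * phiN p n (Suc M) t)" .
  have "s * phiN p n (Suc M) s / cc \<le> mu ^ Suc (Suc M) * (t * phiN p n (Suc M) t / cc)"
    using g cc_pos by (simp add: divide_right_mono)
  hence "(1 + s * phiN p n (Suc M) s / cc) ^ (n - 1)
        \<le> (1 + mu ^ Suc (Suc M) * (t * phiN p n (Suc M) t / cc)) ^ (n - 1)"
    using s0 phs0 cc_pos by (intro power_mono) auto
  also have "\<dots> - 1 \<le> mu ^ Suc (Suc M) * ((1 + t * phiN p n (Suc M) t / cc) ^ (n - 1) - 1)"
    using hconv[of "t * phiN p n (Suc M) t / cc" "mu ^ Suc (Suc M)" "n - 1"] t0 pht0 cc_pos m0
      power_le_one[OF m0 m1, of "Suc (Suc M)"] by simp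
  finally show ?case by (simp add: omegaN_def)
qed

lemma phi_qh:
  assumes s0: "0 \<le> s" and m0: "0 \<le> mu" and m1: "mu \<le> 1" and smu: "s \<le> mu * t"
    and t0: "0 \<le> t" and P: "Psi p n t \<le> 2"
  shows "phiN p n M s \<le> mu ^ M * phiN p n M t"
proof (cases M)
  case 0 then show ?thesis by simp
next
  case (Suc M)
  have st: "s \<le> t" using smu m1 t0 mult_right_mono[OF m1 t0] by simp
  have Ps: "Psi p n s \<le> 2" using Psi_mono[OF s0 st] P by simp
  let ?Ws = "omegaN p n M s" and ?Wt = "omegaN p n M t"
  have Rt: "1 \<le> ?Wt" "2 * t * ?Wt < 1" using R2[OF t0 P, of M] by auto
  have Rs: "1 \<le> ?Ws" using R2[OF s0 Ps, of M] by auto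
  have mM: "mu ^ Suc M \<le> 1" "0 \<le> mu ^ Suc M" using power_le_one[OF m0 m1, of "Suc M"] m0 by (auto simp del: power_Suc)
  have IH: "?Ws - 1 \<le> mu ^ Suc M * (?Wt - 1)" by (rule R3[OF assms])
  have "mu ^ Suc M * (?Wt - 1) \<le> ?Wt - 1" using mM Rt by (simp add: mult_left_le_one_le)
  hence WW: "?Ws \<le> ?Wt" using IH by simp
  have "2 * s * ?Ws \<le> 2 * t * ?Wt" using WW st s0 Rs by (intro mult_mono) auto
  hence den: "1 - 2 * t * ?Wt \<le> 1 - 2 * s * ?Ws" "0 < 1 - 2 * t * ?Wt" using Rt by auto
  have "phiN p n (Suc M) s = (?Ws - 1) / (1 - 2 * s * ?Ws)" by (rule phi_Suc)
  also have "\<dots> \<le> (mu ^ Suc M * (?Wt - 1)) / (1 - 2 * t * ?Wt)"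
    using IH den Rs by (intro frac_le) auto
  also have "\<dots> = mu ^ Suc M * phiN p n (Suc M) t" by (simp add: phi_Suc)
  finally show ?thesis using Suc by simp
qed

lemma phi_lt1:
  assumes t0: "0 \<le> t" and P: "Psi p n t < 2"
  shows "phiN p n (Suc M) t < 1"
proof -
  have P': "Psi p n t \<le> 2" using P by simp
  let ?W = "omegaN p n M t" and ?w = "omega p n t"
  have W: "1 \<le> ?W" "?W \<le> ?w" "2 * t * ?W < 1" using R2[OF t0 P'] by auto
  have a: "2 * t * ?W \<le> 2 * t * ?w" using W t0 by (simp add: mult_left_mono)
  have b: "?w - 1 < 1 - 2 * t * ?w" using P unfolding Psi_def by (simp add: algebra_simps)
  show ?thesis using W a b by (simp add: phi_Suc divide_less_eq_1)
qed

end



section \<open>p-norms\<close>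

lemma q_ge1: "p \<noteq> \<infinity> \<Longrightarrow> 1 \<le> p \<Longrightarrow> 1 \<le> real_of_ereal p"
  by (cases p) auto

lemma Max_set_eq: "{\<bar>v i\<bar> | i. i < n} \<union> {0::real} = insert 0 ((\<lambda>i. \<bar>v i\<bar>) ` {..<n})"
  by auto

lemma pnorm_inf: "pnorm \<infinity> n v = Max (insert 0 ((\<lambda>i. \<bar>v i\<bar>) ` {..<n}))"
  unfolding pnorm_def Max_set_eq by simp

lemma pnorm_fin: "p \<noteq> \<infinity> \<Longrightarrow> pnorm p n v
   = (\<Sum>i<n. \<bar>v i\<bar> powr real_of_ereal p) powr (1 / real_of_ereal p)"
  unfolding pnorm_def by simp

context
  fixes p :: ereal and n :: nat and v :: "nat \<Rightarrow> real"
  assumes p1: "1 \<le> p" and vnn: "\<And>i. i < n \<Longrightarrow> 0 \<le> v i"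
begin

lemma pnorm_nonneg: "0 \<le> pnorm p n v"
proof (cases "p = \<infinity>")
  case True then show ?thesis by (simp add: pnorm_inf Max_ge_iff)
next
  case False then show ?thesis by (simp add: pnorm_fin)
qed

lemma pnorm_ge: assumes i: "i < n" shows "v i \<le> pnorm p n v"
proof (cases "p = \<infinity>")
  case True then show ?thesis using i by (auto simp: pnorm_inf Max_ge_iff intro!: bexI[of _ i])
next
  case False
  let ?q = "real_of_ereal p"
  have q: "1 \<le> ?q" using q_ge1[OF False p1] .
  have "v i = (v i powr ?q) powr (1 / ?q)" using q vnn[OF i] by (simp add: powr_powr)
  also have "\<dots> \<le> (\<Sum>j<n. \<bar>v j\<bar> powr ?q) powr (1 / ?q)"
  proof (rule powr_mono2)
    show "v i powr ?q \<le> (\<Sum>j<n. \<bar>v j\<bar> powr ?q)"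
    proof -
      have "\<bar>v i\<bar> powr ?q \<le> (\<Sum>j<n. \<bar>v j\<bar> powr ?q)"
        by (rule member_le_sum) (use i in auto)
      then show ?thesis using vnn[OF i] by simp
    qed
  qed (use q in auto)
  finally show ?thesis using False by (simp add: pnorm_fin)
qed

lemma pnorm_le_sum: "pnorm p n v \<le> (\<Sum>i<n. v i)"
proof (cases "p = \<infinity>")
  case True
  have "\<forall>x \<in> insert 0 ((\<lambda>i. \<bar>v i\<bar>) ` {..<n}). x \<le> (\<Sum>i<n. v i)"
    using vnn by (auto simp: sum_nonneg intro!: member_le_sum sum_nonneg)
  then show ?thesis using True by (simp add: pnorm_inf)
next
  case False
  let ?q = "real_of_ereal p"
  have q: "1 \<le> ?q" using q_ge1[OF False p1] .
  let ?S = "\<Sum>i<n. v i"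
  have S0: "0 \<le> ?S" by (intro sum_nonneg) (simp add: vnn)
  have "(\<Sum>i<n. \<bar>v i\<bar> powr ?q) \<le> (\<Sum>i<n. v i * ?S powr (?q - 1))"
  proof (rule sum_mono)
    fix i assume "i \<in> {..<n}"
    hence i: "i < n" by simp
    show "\<bar>v i\<bar> powr ?q \<le> v i * ?S powr (?q - 1)"
    proof (cases "v i = 0")
      case True then show ?thesis by simp
    next
      case False
      hence vp: "0 < v i" using vnn[OF i] by simp
      have vS: "v i \<le> ?S" by (rule member_le_sum) (use vnn i in auto)
      have "\<bar>v i\<bar> powr ?q = v i * v i powr (?q - 1)"
        using vp by (simp add: powr_add[symmetric] powr_mult_base)
      also have "\<dots> \<le> v i * ?S powr (?q - 1)"
        using vp vS q by (intro mult_left_mono powr_mono2) auto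
      finally show ?thesis .
    qed
  qed
  also have "\<dots> = ?S * ?S powr (?q - 1)" by (simp add: sum_distrib_right)
  also have "\<dots> = ?S powr ?q"
  proof (cases "?S = 0")
    case True then show ?thesis using q by simp
  next
    case False then show ?thesis using S0 by (simp add: powr_mult_base)
  qed
  finally have le: "(\<Sum>i<n. \<bar>v i\<bar> powr ?q) \<le> ?S powr ?q" .
  have "(\<Sum>i<n. \<bar>v i\<bar> powr ?q) powr (1 / ?q) \<le> (?S powr ?q) powr (1 / ?q)"
    using le q by (intro powr_mono2) (auto simp: sum_nonneg)
  also have "\<dots> = ?S" using S0 q by (simp add: powr_powr)
  finally show ?thesis using False by (simp add: pnorm_fin)
qed

end

lemma pnorm_scale:
  assumes p1: "1 \<le> p" and vnn: "\<And>i. i < n \<Longrightarrow> 0 \<le> v i"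
    and c0: "0 \<le> c" and le: "\<And>i. i < n \<Longrightarrow> v i \<le> c * w i"
  shows "pnorm p n v \<le> c * pnorm p n w"
proof (cases "p = \<infinity>")
  case True
  have wnn: "\<And>i. i < n \<Longrightarrow> 0 \<le> c * w i" using vnn le order_trans by blast
  have "\<forall>x \<in> insert 0 ((\<lambda>i. \<bar>v i\<bar>) ` {..<n}). x \<le> c * Max (insert 0 ((\<lambda>i. \<bar>w i\<bar>) ` {..<n}))"
  proof
    fix x assume "x \<in> insert 0 ((\<lambda>i. \<bar>v i\<bar>) ` {..<n})"
    then consider "x = 0" | i where "i < n" "x = \<bar>v i\<bar>" by auto
    then show "x \<le> c * Max (insert 0 ((\<lambda>i. \<bar>w i\<bar>) ` {..<n}))"
    proof cases
      case 1 then show ?thesis using c0 by (simp add: Max_ge_iff)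
    next
      case 2
      have "\<bar>w i\<bar> \<le> Max (insert 0 ((\<lambda>i. \<bar>w i\<bar>) ` {..<n}))" using 2 by (simp add: Max_ge_iff)
      hence "c * \<bar>w i\<bar> \<le> c * Max (insert 0 ((\<lambda>i. \<bar>w i\<bar>) ` {..<n}))" using c0 by (rule mult_left_mono)
      moreover have "x \<le> c * \<bar>w i\<bar>" using 2 vnn le[of i] c0
        by (metis abs_ge_self abs_of_nonneg mult_left_mono order_trans)
      ultimately show ?thesis by linarith
    qed
  qed
  then show ?thesis using True by (simp add: pnorm_inf)
next
  case False
  let ?q = "real_of_ereal p"
  have q: "1 \<le> ?q" using q_ge1[OF False p1] .
  have "(\<Sum>i<n. \<bar>v i\<bar> powr ?q) \<le> (\<Sum>i<n. c powr ?q * \<bar>w i\<bar> powr ?q)"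
  proof (rule sum_mono)
    fix i assume "i \<in> {..<n}" hence i: "i < n" by simp
    have "\<bar>v i\<bar> \<le> \<bar>c * w i\<bar>" using vnn[OF i] le[OF i] by simp
    hence "\<bar>v i\<bar> powr ?q \<le> \<bar>c * w i\<bar> powr ?q" using q by (intro powr_mono2) auto
    also have "\<dots> = c powr ?q * \<bar>w i\<bar> powr ?q" using c0 by (simp add: abs_mult powr_mult)
    finally show "\<bar>v i\<bar> powr ?q \<le> c powr ?q * \<bar>w i\<bar> powr ?q" .
  qed
  also have "\<dots> = c powr ?q * (\<Sum>i<n. \<bar>w i\<bar> powr ?q)" by (simp add: sum_distrib_left)
  finally have le2: "(\<Sum>i<n. \<bar>v i\<bar> powr ?q) \<le> c powr ?q * (\<Sum>i<n. \<bar>w i\<bar> powr ?q)" .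
  have "(\<Sum>i<n. \<bar>v i\<bar> powr ?q) powr (1/?q) \<le> (c powr ?q * (\<Sum>i<n. \<bar>w i\<bar> powr ?q)) powr (1/?q)"
    using le2 q by (intro powr_mono2) (auto simp: sum_nonneg)
  also have "\<dots> = c * (\<Sum>i<n. \<bar>w i\<bar> powr ?q) powr (1/?q)"
    using c0 q by (simp add: powr_mult powr_powr sum_nonneg)
  finally show ?thesis using False by (simp add: pnorm_fin)
qed




lemma pnorm_sum_bound:
  assumes p1: "1 \<le> p" and n2: "n \<ge> 2" and vnn: "\<And>i. i < n \<Longrightarrow> 0 \<le> v i"
    and S: "S \<subseteq> {..<n}" and cS: "card S = n - 1"
  shows "(\<Sum>j\<in>S. v j) \<le> real (n - 1) * pnorm p n v / rootp p n"
proof (cases "p = \<infinity>")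
  case True
  have "(\<Sum>j\<in>S. v j) \<le> (\<Sum>j\<in>S. pnorm p n v)"
    using S by (intro sum_mono pnorm_ge[OF p1 vnn]) auto
  then show ?thesis using cS True by (simp add: rootp_def)
next
  case False
  let ?q = "real_of_ereal p"
  have q: "1 \<le> ?q" using q_ge1[OF False p1] .
  have finS: "finite S" using S finite_subset by blast
  let ?m = "real (n - 1)"
  have m1: "1 \<le> ?m" using n2 by simp
  have pn0: "0 \<le> pnorm p n v" by (rule pnorm_nonneg[OF p1 vnn])
  define S' where "S' = {j\<in>S. 0 < v j}"
  have S'S: "S' \<subseteq> S" by (auto simp: S'_def)
  have finS': "finite S'" using finS S'S finite_subset by blast
  have sumeq: "(\<Sum>j\<in>S. v j) = (\<Sum>j\<in>S'. v j)"
  proof (rule sum.mono_neutral_right[OF finS S'S])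
    show "\<forall>i\<in>S - S'. v i = 0" using S vnn by (force simp: S'_def)
  qed
  let ?T = "\<Sum>i<n. \<bar>v i\<bar> powr ?q"
  have rp: "rootp p n = ?m powr (1 / ?q)" using False by (simp add: rootp_def)
  have pn: "pnorm p n v = ?T powr (1 / ?q)" using False by (simp add: pnorm_fin)
  show ?thesis
  proof (cases "S' = {}")
    case True
    then show ?thesis using sumeq pn0 rootp_pos[OF n2, of p] by simp
  next
    case ne: False
    let ?k = "real (card S')"
    have k1: "1 \<le> ?k" using ne finS' by (simp add: Suc_le_eq card_gt_0_iff)
    have km: "?k \<le> ?m" using card_mono[OF finS S'S] cS by simp
    let ?A = "\<Sum>j\<in>S'. v j" and ?B = "\<Sum>j\<in>S'. v j powr ?q"
    have vpos: "\<And>j. j \<in> S' \<Longrightarrow> v j \<in> {0<..}" by (auto simp: S'_def)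
    have J: "(\<Sum>j\<in>S'. (1 / ?k) * v j) powr ?q \<le> (\<Sum>j\<in>S'. (1 / ?k) * v j powr ?q)"
      using convex_on_sum[OF finS' ne powr_convex[OF q], of "\<lambda>_. 1 / ?k" v] vpos k1
      by simp
    hence J2: "(?A / ?k) powr ?q \<le> ?B / ?k"
      by (simp add: sum_distrib_right[symmetric] sum_divide_distrib[symmetric])
    have A0: "0 \<le> ?A" using vpos by (intro sum_nonneg) (auto simp: less_imp_le)
    have B0: "0 \<le> ?B" by (intro sum_nonneg) simp
    have "?A / ?k = ((?A / ?k) powr ?q) powr (1 / ?q)" using q A0 k1 by (simp add: powr_powr)
    also have "\<dots> \<le> (?B / ?k) powr (1 / ?q)" using J2 q A0 k1 by (intro powr_mono2) auto
    finally have A1: "?A / ?k \<le> (?B / ?k) powr (1 / ?q)" .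
    have BT: "?B \<le> ?T"
    proof -
      have "?B = (\<Sum>j\<in>S'. \<bar>v j\<bar> powr ?q)" by (intro sum.cong) (auto simp: S'_def)
      also have "\<dots> \<le> ?T" using S'S S by (intro sum_mono2) auto
      finally show ?thesis .
    qed
    have "?A \<le> ?k * (?B / ?k) powr (1 / ?q)" using A1 k1 by (simp add: field_simps)
    also have "\<dots> = (?k / ?k powr (1 / ?q)) * ?B powr (1 / ?q)"
      using k1 B0 by (simp add: powr_divide)
    also have "?k / ?k powr (1 / ?q) = ?k powr (1 - 1 / ?q)"
      using k1 by (simp add: powr_diff)
    also have "?k powr (1 - 1 / ?q) * ?B powr (1 / ?q) \<le> ?m powr (1 - 1 / ?q) * ?T powr (1 / ?q)"
    proof (rule mult_mono)
      show "?k powr (1 - 1 / ?q) \<le> ?m powr (1 - 1 / ?q)" using km k1 q by (intro powr_mono2) auto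
      show "?B powr (1 / ?q) \<le> ?T powr (1 / ?q)" using BT B0 q by (intro powr_mono2) auto
    qed auto
    also have "?m powr (1 - 1 / ?q) = ?m / ?m powr (1 / ?q)" using m1 by (simp add: powr_diff)
    finally show ?thesis using sumeq rp pn by simp
  qed
qed

lemma prod_amgm:
  assumes fin: "finite S" and b: "\<And>j. j \<in> S \<Longrightarrow> 0 \<le> b j" and cS: "card S = m" and m: "m > 0"
  shows "(\<Prod>j\<in>S. 1 + b j) \<le> (1 + (\<Sum>j\<in>S. b j) / m) ^ m"
proof -
  have ne: "S \<noteq> {}" using cS m by auto
  have AG: "(\<Prod>i\<in>S. 1 + b i) powr (1 / card S) \<le> (\<Sum>i\<in>S. (1 + b i) / card S)"
    using arith_geom_mean[OF fin ne, of "\<lambda>i. 1 + b i"] b by (simp add: add_nonneg_nonneg)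
  have "(\<Sum>i\<in>S. (1 + b i) / card S) = 1 + (\<Sum>j\<in>S. b j) / m"
    using cS m by (simp add: sum_divide_distrib[symmetric] sum.distrib add_divide_distrib)
  hence AG2: "(\<Prod>i\<in>S. 1 + b i) powr (1 / m) \<le> 1 + (\<Sum>j\<in>S. b j) / m" using AG cS by simp
  have P0: "0 \<le> (\<Prod>i\<in>S. 1 + b i)" using b by (intro prod_nonneg) (simp add: add_nonneg_nonneg)
  have "((\<Prod>i\<in>S. 1 + b i) powr (1 / m)) ^ m = ((\<Prod>i\<in>S. 1 + b i) powr (1 / m)) powr (real m)"
    using P0 m by (intro powr_realpow'[symmetric]) auto
  also have "\<dots> = (\<Prod>i\<in>S. 1 + b i)" using P0 m by (simp add: powr_powr)
  finally have "(\<Prod>i\<in>S. 1 + b i) = ((\<Prod>i\<in>S. 1 + b i) powr (1 / m)) ^ m" by simp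
  also have "\<dots> \<le> (1 + (\<Sum>j\<in>S. b j) / m) ^ m" using AG2 by (intro power_mono) auto
  finally show ?thesis .
qed




definition Ei :: "('a::field \<Rightarrow> real) \<Rightarrow> nat \<Rightarrow> (nat \<Rightarrow> 'a) \<Rightarrow> (nat \<Rightarrow> 'a) \<Rightarrow> nat \<Rightarrow> real" where
  "Ei av n \<xi> x j = av (x j - \<xi> j) / dvec av n x j"

lemma Efun_Ei: "Efun av p n \<xi> x = pnorm p n (Ei av n \<xi> x)"
  by (simp add: Efun_def Ei_def[abs_def])

definition distinct_on :: "nat \<Rightarrow> (nat \<Rightarrow> 'a) \<Rightarrow> bool" where
  "distinct_on n x \<longleftrightarrow> (\<forall>i<n. \<forall>j<n. i \<noteq> j \<longrightarrow> x i \<noteq> x j)"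

lemma dvec_eq: "dvec av n x i = Min ((\<lambda>j. av (x i - x j)) ` ({..<n} - {i}))"
  unfolding dvec_def by (rule arg_cong[where f=Min]) auto

context
  fixes av :: "'a::field \<Rightarrow> real" and n :: nat
  assumes av: "is_abs_value av" and n2: "n \<ge> 2"
begin

lemma ne_set: "i < n \<Longrightarrow> {..<n} - {i} \<noteq> {}"
proof -
  assume i: "i < n"
  have "(if i = 0 then 1 else 0) \<in> {..<n} - {i}" using i n2 by auto
  then show ?thesis by blast
qed

lemma dvec_pos: "distinct_on n x \<Longrightarrow> i < n \<Longrightarrow> dvec av n x i > 0"
  unfolding dvec_eq using ne_set[of i]
  by (subst Min_gr_iff) (auto simp: distinct_on_def av_pos[OF av])

lemma dvec_le: "i < n \<Longrightarrow> j < n \<Longrightarrow> j \<noteq> i \<Longrightarrow> dvec av n x i \<le> av (x i - x j)"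
  unfolding dvec_eq by (rule Min_le) auto

lemma dvec_ge: "i < n \<Longrightarrow> (\<And>j. j < n \<Longrightarrow> j \<noteq> i \<Longrightarrow> c \<le> av (y i - y j)) \<Longrightarrow> c \<le> dvec av n y i"
  unfolding dvec_eq using ne_set[of i] by (subst Min_ge_iff) auto

end




context
  fixes av :: "'a::field \<Rightarrow> real" and f :: "'a poly" and n :: nat and \<xi> :: "nat \<Rightarrow> 'a" and p :: ereal
  assumes av: "is_abs_value av" and n2: "n \<ge> 2" and p1: "1 \<le> p"
    and root: "root_vector f n \<xi>" and a0: "lead_coeff f \<noteq> 0"
begin

lemma dvec_nonneg: "i < n \<Longrightarrow> 0 \<le> dvec av n x i"
  by (rule dvec_ge[OF av n2]) (auto intro: av_nonneg[OF av])

lemma Ei_nonneg: "i < n \<Longrightarrow> 0 \<le> Ei av n \<xi> x i"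
  unfolding Ei_def using dvec_nonneg[of i x] av_nonneg[OF av] by simp

lemma e_eq: "distinct_on n x \<Longrightarrow> i < n \<Longrightarrow> av (x i - \<xi> i) = Ei av n \<xi> x i * dvec av n x i"
  unfolding Ei_def using dvec_pos[OF av n2, of x i] by simp

lemma Ei_le_E: "i < n \<Longrightarrow> Ei av n \<xi> x i \<le> Efun av p n \<xi> x"
  unfolding Efun_Ei by (rule pnorm_ge[OF p1]) (auto intro: Ei_nonneg)

lemma E_nonneg: "0 \<le> Efun av p n \<xi> x"
  unfolding Efun_Ei by (rule pnorm_nonneg[OF p1]) (auto intro: Ei_nonneg)

lemma e_le_d: "distinct_on n x \<Longrightarrow> i < n \<Longrightarrow> av (x i - \<xi> i) \<le> Efun av p n \<xi> x * dvec av n x i"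
  using e_eq[of x i] Ei_le_E[of i x] dvec_pos[OF av n2, of x i] by (simp add: mult_right_mono)

lemma e_le: "distinct_on n x \<Longrightarrow> i < n \<Longrightarrow> j < n \<Longrightarrow> i \<noteq> j
   \<Longrightarrow> av (x j - \<xi> j) \<le> Efun av p n \<xi> x * av (x i - x j)"
proof -
  assume d: "distinct_on n x" and ij: "i < n" "j < n" "i \<noteq> j"
  have "dvec av n x j \<le> av (x j - x i)" using dvec_le[OF av n2] ij by auto
  also have "\<dots> = av (x i - x j)" by (rule av_commute[OF av])
  finally have "Efun av p n \<xi> x * dvec av n x j \<le> Efun av p n \<xi> x * av (x i - x j)"
    using E_nonneg by (simp add: mult_left_mono)
  then show ?thesis using e_le_d[OF d ij(2)] by linarith
qed

lemma W_ident:
  assumes i: "i < n" and ne: "\<And>j. j \<in> {..<n} - {i} \<Longrightarrow> x i \<noteq> y j"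
  shows "x i - poly f (x i) / (lead_coeff f * (\<Prod>j\<in>{..<n} - {i}. x i - y j)) - \<xi> i
     = (x i - \<xi> i) * (1 - (\<Prod>j\<in>{..<n} - {i}. (x i - \<xi> j) / (x i - y j)))"
proof -
  have pf: "poly f (x i) = lead_coeff f * ((x i - \<xi> i) * (\<Prod>j\<in>{..<n} - {i}. x i - \<xi> j))"
    using root i unfolding root_vector_def by (simp add: prod.remove[of "{..<n}" i])
  have Py: "(\<Prod>j\<in>{..<n} - {i}. x i - y j) \<noteq> 0" using ne by simp
  have "(\<Prod>j\<in>{..<n} - {i}. (x i - \<xi> j) / (x i - y j))
      = (\<Prod>j\<in>{..<n} - {i}. x i - \<xi> j) / (\<Prod>j\<in>{..<n} - {i}. x i - y j)"
    by (rule prod_dividef)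
  then show ?thesis using pf Py a0 by (simp add: field_simps)
qed

end



context
  fixes av :: "'a::field \<Rightarrow> real" and f :: "'a poly" and n :: nat and \<xi> :: "nat \<Rightarrow> 'a" and p :: ereal
  assumes av: "is_abs_value av" and n2: "n \<ge> 2" and p1: "1 \<le> p"
    and root: "root_vector f n \<xi>" and a0: "lead_coeff f \<noteq> 0"
begin

lemma inner:
  assumes d: "distinct_on n x" and P: "Psi p n (Efun av p n \<xi> x) \<le> 2"
  shows "x \<in> DW f n M \<and> (\<forall>i<n. av (TW f n M x i - \<xi> i)
     \<le> (if M = 0 then 1 else omegaN p n (M - 1) (Efun av p n \<xi> x) - 1) * av (x i - \<xi> i))"
proof (induction M)
  case 0 show ?case by simp
next
  case (Suc M)
  define t where "t = Efun av p n \<xi> x"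
  define y where "y = TW f n M x"
  define \<beta> where "\<beta> = (if M = 0 then 1 else omegaN p n (M - 1) t - 1)"
  have t0: "0 \<le> t" unfolding t_def by (rule E_nonneg[OF av n2 p1 root a0])
  have Pt: "Psi p n t \<le> 2" using P by (simp add: t_def)
  have IH1: "x \<in> DW f n M" using Suc by simp
  have IH2: "\<And>i. i < n \<Longrightarrow> av (y i - \<xi> i) \<le> \<beta> * av (x i - \<xi> i)"
    using Suc unfolding y_def \<beta>_def t_def by blast
  have key: "0 < av (x i - y j) \<and> av (y j - \<xi> j) \<le> phiN p n M t * Ei av n \<xi> x j * av (x i - y j)"
    if ij: "i < n" "j < n" "j \<noteq> i" for i j
  proof -
    let ?q = "av (x i - x j)"
    have q0: "0 < ?q" using d ij by (intro av_pos[OF av]) (auto simp: distinct_on_def)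
    have ej: "av (x j - \<xi> j) \<le> t * ?q" unfolding t_def using e_le[OF av n2 p1 root a0 d] ij by auto
    have dj: "dvec av n x j \<le> ?q" using dvec_le[OF av n2, of j i x] ij av_commute[OF av, of "x j" "x i"] by auto
    have eeq: "av (x j - \<xi> j) = Ei av n \<xi> x j * dvec av n x j" using e_eq[OF av n2 p1 root a0 d] ij by auto
    have Ei0: "0 \<le> Ei av n \<xi> x j" using Ei_nonneg[OF av n2 p1 root a0] ij by auto
    have eEq: "av (x j - \<xi> j) \<le> Ei av n \<xi> x j * ?q" using eeq dj Ei0 by (simp add: mult_left_mono)
    show ?thesis
    proof (cases M)
      case 0
      then show ?thesis using q0 eEq by (simp add: y_def)
    next
      case (Suc M')
      let ?W = "omegaN p n M' t"
      have R: "1 \<le> ?W" "2 * t * ?W < 1" using R2[OF n2 t0 Pt, of M'] by auto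
      have bet: "\<beta> = ?W - 1" using Suc by (simp add: \<beta>_def)
      have yj: "av (y j - \<xi> j) \<le> (?W - 1) * av (x j - \<xi> j)" using IH2[OF ij(2)] bet by simp
      have "av (x j - y j) \<le> av (x j - \<xi> j) + av (\<xi> j - y j)" by (rule av_diff_tri[OF av])
      also have "av (\<xi> j - y j) = av (y j - \<xi> j)" by (rule av_commute[OF av])
      finally have "av (x j - y j) \<le> ?W * av (x j - \<xi> j)" using yj by (simp add: algebra_simps)
      also have "\<dots> \<le> ?W * (t * ?q)" using ej R by (simp add: mult_left_mono)
      finally have xy: "av (x j - y j) \<le> ?W * t * ?q" by (simp add: mult.assoc)
      have "?q - av (y j - x j) \<le> av ((x i - x j) - (y j - x j))" by (rule av_rev_tri[OF av])
      hence low: "?q - ?W * t * ?q \<le> av (x i - y j)" using xy av_commute[OF av, of "y j" "x j"] by simp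
      have pos1: "0 < 1 - 2 * t * ?W" using R by simp
      have lowpos: "?q * (1 - 2 * t * ?W) \<le> ?q - ?W * t * ?q"
        using q0 t0 R by (simp add: algebra_simps mult_nonneg_nonneg)
      have "0 < ?q * (1 - 2 * t * ?W)" using q0 pos1 by simp
      hence pos: "0 < av (x i - y j)" using low lowpos by linarith
      have ph: "phiN p n M t = (?W - 1) / (1 - 2 * t * ?W)" using Suc by (simp add: phi_Suc)
      have "av (y j - \<xi> j) \<le> (?W - 1) * (Ei av n \<xi> x j * ?q)"
        using yj eEq R by (meson diff_ge_0_iff_ge mult_left_mono order_trans)
      also have "\<dots> = phiN p n M t * Ei av n \<xi> x j * (?q * (1 - 2 * t * ?W))"
      proof -
        have phd: "?W - 1 = phiN p n M t * (1 - 2 * t * ?W)" using ph pos1 by (simp add: field_simps)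
        show ?thesis unfolding phd by (simp add: algebra_simps)
      qed
      also have "\<dots> \<le> phiN p n M t * Ei av n \<xi> x j * av (x i - y j)"
      proof (rule mult_left_mono)
        show "?q * (1 - 2 * t * ?W) \<le> av (x i - y j)" using low lowpos by linarith
        show "0 \<le> phiN p n M t * Ei av n \<xi> x j" using R2[OF n2 t0 Pt, of M] Ei0 by simp
      qed
      finally show ?thesis using pos by simp
    qed
  qed
  have DWs: "x \<in> DW f n (Suc M)"
    using IH1 key by (auto simp: y_def dest!: av_pos[OF av] simp del: av_zero) (metis av_0[OF av] less_irrefl right_minus_eq)
  have bound: "av (TW f n (Suc M) x i - \<xi> i) \<le> (omegaN p n M t - 1) * av (x i - \<xi> i)" if i: "i < n" for i
  proof -
    let ?S = "{..<n} - {i}"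
    let ?z = "\<lambda>j. (x i - \<xi> j) / (x i - y j)"
    let ?ph = "phiN p n M t"
    have ne: "\<And>j. j \<in> ?S \<Longrightarrow> x i \<noteq> y j" using key i
      by (metis DiffE lessThan_iff insertI1 av_0[OF av] less_irrefl right_minus_eq)
    have "TW f n (Suc M) x i - \<xi> i
        = x i - poly f (x i) / (lead_coeff f * (\<Prod>j\<in>?S. x i - y j)) - \<xi> i"
      by (simp add: y_def)
    also have "\<dots> = (x i - \<xi> i) * (1 - prod ?z ?S)" by (rule W_ident[OF av n2 p1 root a0, of i x y, OF i ne])
    finally have id: "av (TW f n (Suc M) x i - \<xi> i) = av (x i - \<xi> i) * av (1 - prod ?z ?S)"
      by (simp add: av_mult[OF av])
    have zb: "av (?z j - 1) \<le> ?ph * Ei av n \<xi> x j" if j: "j \<in> ?S" for j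
    proof -
      have jj: "j < n" "j \<noteq> i" using j by auto
      have k: "0 < av (x i - y j)" "av (y j - \<xi> j) \<le> ?ph * Ei av n \<xi> x j * av (x i - y j)"
        using key[OF i jj] by auto
      have "?z j - 1 = (y j - \<xi> j) / (x i - y j)" using ne[OF j] by (simp add: field_simps)
      hence "av (?z j - 1) = av (y j - \<xi> j) / av (x i - y j)" by (simp add: av_divide[OF av])
      then show ?thesis using k by (simp add: divide_le_eq)
    qed
    have finS: "finite ?S" by simp
    have cS: "card ?S = n - 1" using i by simp
    have ph0: "0 \<le> ?ph" using R2[OF n2 t0 Pt, of M] by simp
    have b0: "\<And>j. j \<in> ?S \<Longrightarrow> 0 \<le> ?ph * Ei av n \<xi> x j"
      using ph0 Ei_nonneg[OF av n2 p1 root a0] by auto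
    have "av (1 - prod ?z ?S) \<le> (\<Prod>j\<in>?S. 1 + ?ph * Ei av n \<xi> x j) - 1"
      by (rule av_prod_minus_one[OF av finS zb])
    also have "(\<Prod>j\<in>?S. 1 + ?ph * Ei av n \<xi> x j)
       \<le> (1 + (\<Sum>j\<in>?S. ?ph * Ei av n \<xi> x j) / (n - 1)) ^ (n - 1)"
      using prod_amgm[OF finS b0 cS] n2 by simp
    also have "\<dots> \<le> (1 + t * ?ph / rootp p n) ^ (n - 1)"
    proof (rule power_mono)
      have sb: "(\<Sum>j\<in>?S. Ei av n \<xi> x j) \<le> real (n - 1) * t / rootp p n"
        unfolding t_def Efun_Ei
        by (rule pnorm_sum_bound[OF p1 n2]) (use Ei_nonneg[OF av n2 p1 root a0] cS in auto)
      have "(\<Sum>j\<in>?S. ?ph * Ei av n \<xi> x j) / (n - 1) = ?ph * ((\<Sum>j\<in>?S. Ei av n \<xi> x j) / (n - 1))"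
        by (simp add: sum_distrib_left)
      also have "\<dots> \<le> ?ph * (t / rootp p n)"
        using sb n2 ph0 by (intro mult_left_mono) (auto simp: divide_le_eq mult.commute)
      finally show "1 + (\<Sum>j\<in>?S. ?ph * Ei av n \<xi> x j) / (n - 1) \<le> 1 + t * ?ph / rootp p n"
        by (simp add: mult.commute)
      have "0 \<le> (\<Sum>j\<in>?S. ?ph * Ei av n \<xi> x j)" using b0 by (intro sum_nonneg) blast
      then show "0 \<le> 1 + (\<Sum>j\<in>?S. ?ph * Ei av n \<xi> x j) / (n - 1)" by simp
    qed
    also have "\<dots> = omegaN p n M t" by (simp add: omegaN_def)
    finally have "av (1 - prod ?z ?S) \<le> omegaN p n M t - 1" by simp
    then show ?thesis using id av_nonneg[OF av, of "x i - \<xi> i"]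
      by (simp add: mult_left_mono mult.commute)
  qed
  show ?case using DWs bound by (simp add: t_def)
qed

end



context
  fixes av :: "'a::field \<Rightarrow> real" and f :: "'a poly" and n :: nat and \<xi> :: "nat \<Rightarrow> 'a" and p :: ereal
  assumes av: "is_abs_value av" and n2: "n \<ge> 2" and p1: "1 \<le> p"
    and root: "root_vector f n \<xi>" and a0: "lead_coeff f \<noteq> 0"
begin

lemma outer:
  assumes N1: "N \<ge> 1" and d: "distinct_on n x" and P: "Psi p n (Efun av p n \<xi> x) \<le> 2"
  shows "x \<in> DW f n N
    \<and> (\<forall>i<n. av (TW f n N x i - \<xi> i) \<le> (omegaN p n (N - 1) (Efun av p n \<xi> x) - 1) * av (x i - \<xi> i))
    \<and> distinct_on n (TW f n N x)
    \<and> (\<forall>i<n. (1 - 2 * Efun av p n \<xi> x * omegaN p n (N - 1) (Efun av p n \<xi> x)) * dvec av n x i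
            \<le> dvec av n (TW f n N x) i)
    \<and> Efun av p n \<xi> (TW f n N x) \<le> phiN p n N (Efun av p n \<xi> x) * Efun av p n \<xi> x"
proof -
  define t where "t = Efun av p n \<xi> x"
  define x' where "x' = TW f n N x"
  define W where "W = omegaN p n (N - 1) t"
  have t0: "0 \<le> t" unfolding t_def by (rule E_nonneg[OF av n2 p1 root a0])
  have Pt: "Psi p n t \<le> 2" using P by (simp add: t_def)
  have R: "1 \<le> W" "2 * t * W < 1" using R2[OF n2 t0 Pt, of "N - 1"] by (auto simp: W_def)
  have I: "x \<in> DW f n N \<and> (\<forall>i<n. av (x' i - \<xi> i) \<le> (W - 1) * av (x i - \<xi> i))"
    using inner[OF av n2 p1 root a0 d P, of N] N1 by (simp add: x'_def W_def t_def)
  have bnd: "\<And>i. i < n \<Longrightarrow> av (x' i - \<xi> i) \<le> (W - 1) * av (x i - \<xi> i)" using I by blast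
  have mv: "av (x' i - x i) \<le> W * t * av (x i - x j)" if ij: "i < n" "j < n" "i \<noteq> j" for i j
  proof -
    have "av (x' i - x i) \<le> av (x' i - \<xi> i) + av (\<xi> i - x i)" by (rule av_diff_tri[OF av])
    also have "av (\<xi> i - x i) = av (x i - \<xi> i)" by (rule av_commute[OF av])
    finally have "av (x' i - x i) \<le> W * av (x i - \<xi> i)" using bnd[OF ij(1)] by (simp add: algebra_simps)
    also have "av (x i - \<xi> i) \<le> t * av (x j - x i)"
      unfolding t_def using e_le[OF av n2 p1 root a0 d, of j i] ij by auto
    also have "av (x j - x i) = av (x i - x j)" by (rule av_commute[OF av])
    finally show ?thesis using R by (simp add: mult_left_mono mult.assoc)
  qed
  have sep: "(1 - 2 * t * W) * av (x i - x j) \<le> av (x' i - x' j)" if ij: "i < n" "j < n" "i \<noteq> j" for i j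
  proof -
    have "av (x i - x j) \<le> av (x i - x' i) + av (x' i - x j)" by (rule av_diff_tri[OF av])
    also have "av (x' i - x j) \<le> av (x' i - x' j) + av (x' j - x j)" by (rule av_diff_tri[OF av])
    also have "av (x i - x' i) = av (x' i - x i)" by (rule av_commute[OF av])
    finally have "av (x i - x j) \<le> av (x' i - x i) + av (x' i - x' j) + av (x' j - x j)" by simp
    moreover have "av (x' i - x i) \<le> W * t * av (x i - x j)" by (rule mv[OF ij])
    moreover have "av (x' j - x j) \<le> W * t * av (x j - x i)" using mv ij by auto
    moreover have "av (x j - x i) = av (x i - x j)" by (rule av_commute[OF av])
    ultimately show ?thesis by (simp add: algebra_simps)
  qed
  have pos: "0 < 1 - 2 * t * W" using R by simp
  have dist': "distinct_on n x'"
    unfolding distinct_on_def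
  proof (intro allI impI)
    fix i j assume ij: "i < n" "j < n" "i \<noteq> j"
    have "0 < av (x i - x j)" using d ij by (intro av_pos[OF av]) (auto simp: distinct_on_def)
    hence "0 < av (x' i - x' j)" using sep[OF ij] pos by (meson mult_pos_pos order_less_le_trans)
    then show "x' i \<noteq> x' j" using av_0[OF av] by auto
  qed
  have dd: "(1 - 2 * t * W) * dvec av n x i \<le> dvec av n x' i" if i: "i < n" for i
  proof (rule dvec_ge[OF av n2 i])
    fix j assume j: "j < n" "j \<noteq> i"
    have "(1 - 2 * t * W) * dvec av n x i \<le> (1 - 2 * t * W) * av (x i - x j)"
      using dvec_le[OF av n2 i j] pos by simp
    also have "\<dots> \<le> av (x' i - x' j)" using sep i j by auto
    finally show "(1 - 2 * t * W) * dvec av n x i \<le> av (x' i - x' j)" .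
  qed
  have phN: "phiN p n N t = (W - 1) / (1 - 2 * t * W)"
    using N1 phi_Suc[of p n "N - 1" t] by (simp add: W_def)
  have ph0: "0 \<le> phiN p n N t" using R2[OF n2 t0 Pt, of N] by simp
  have Eb0: "pnorm p n (Ei av n \<xi> x') \<le> phiN p n N t * pnorm p n (Ei av n \<xi> x)"
  proof (rule pnorm_scale[OF p1 _ ph0])
    show "\<And>i. i < n \<Longrightarrow> 0 \<le> Ei av n \<xi> x' i" by (rule Ei_nonneg[OF av n2 p1 root a0])
    fix i assume i: "i < n"
    have dx: "0 < dvec av n x i" by (rule dvec_pos[OF av n2 d i])
    have dx': "0 < dvec av n x' i" by (rule dvec_pos[OF av n2 dist' i])
    have "Ei av n \<xi> x' i = av (x' i - \<xi> i) / dvec av n x' i" by (simp add: Ei_def)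
    also have "\<dots> \<le> ((W - 1) * av (x i - \<xi> i)) / ((1 - 2 * t * W) * dvec av n x i)"
      using bnd[OF i] dd[OF i] dx dx' pos R av_nonneg[OF av]
      by (intro frac_le) auto
    also have "\<dots> = phiN p n N t * Ei av n \<xi> x i" using pos dx by (simp add: phN Ei_def)
    finally show "Ei av n \<xi> x' i \<le> phiN p n N t * Ei av n \<xi> x i" .
  qed
  have Eb: "Efun av p n \<xi> x' \<le> phiN p n N t * t" using Eb0 by (simp add: Efun_Ei t_def)
  show ?thesis using I dist' dd Eb by (simp add: x'_def t_def W_def)
qed

end



lemma powr_le_lin:
  fixes c s :: real
  assumes c: "0 \<le> c" "c < 1" and s: "0 \<le> s" "s \<le> 1"
  shows "(1 - c) powr s \<le> 1 - c * s"
proof -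
  have "exp ((1 - s) *\<^sub>R 0 + s *\<^sub>R ln (1 - c)) \<le> (1 - s) * exp 0 + s * exp (ln (1 - c))"
    by (rule convex_onD[OF exp_convex]) (use s in auto)
  moreover have "(1 - c) powr s = exp (s * ln (1 - c))" using c by (simp add: powr_def)
  ultimately show ?thesis using c by (simp add: algebra_simps)
qed

lemma errmax_eq: "errmax av n x \<xi> = Max (insert 0 ((\<lambda>i. av (x i - \<xi> i)) ` {..<n}))"
  unfolding errmax_def by (rule arg_cong[where f=Max]) auto

lemma errmax_ge: "i < n \<Longrightarrow> av (x i - \<xi> i) \<le> errmax av n x \<xi>"
  unfolding errmax_eq by (auto simp: Max_ge_iff intro!: bexI[of _ i])

lemma errmax_nonneg: "0 \<le> errmax av n x \<xi>"
  unfolding errmax_eq by (auto simp: Max_ge_iff)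

lemma errmax_le: "0 \<le> B \<Longrightarrow> (\<And>i. i < n \<Longrightarrow> av (x i - \<xi> i) \<le> B) \<Longrightarrow> errmax av n x \<xi> \<le> B"
  unfolding errmax_eq by auto

lemma rsq:
  fixes f :: "'a::field poly" and \<xi> :: "nat \<Rightarrow> 'a"
  assumes root: "root_vector f n \<xi>" and a0: "lead_coeff f \<noteq> 0" and deg: "degree f = n"
    and n2: "n \<ge> 2" and inj: "inj_on \<xi> {..<n}"
  shows "rsquarefree f"
proof -
  have f0: "f \<noteq> 0" using a0 by auto
  have rootsf: "poly f z = 0 \<longleftrightarrow> z \<in> \<xi> ` {..<n}" for z
    using root a0 unfolding root_vector_def by (auto simp: prod_zero_iff)
  have "order a f \<le> 1" for a
  proof (rule ccontr)
    assume "\<not> order a f \<le> 1"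
    hence "2 \<le> order a f" by simp
    hence "[:-a, 1:] ^ 2 dvd f" using order_divides by blast
    then obtain q where fq: "f = [:-a, 1:] ^ 2 * q" by (rule dvdE)
    have q0: "q \<noteq> 0" using fq f0 by auto
    have dq: "degree q = n - 2"
      using fq deg q0 by (simp add: degree_mult_eq degree_linear_power)
    have "poly f a = 0" using fq by simp
    then obtain i0 where i0: "i0 < n" "\<xi> i0 = a" using rootsf by auto
    have sub: "\<xi> ` ({..<n} - {i0}) \<subseteq> {x. poly q x = 0}"
    proof
      fix z assume "z \<in> \<xi> ` ({..<n} - {i0})"
      then obtain j where j: "j < n" "j \<noteq> i0" "z = \<xi> j" by auto
      have za: "z \<noteq> a" using inj j i0 unfolding inj_on_def by auto
      have "poly f z = 0" using rootsf j by auto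
      hence "(z - a) ^ 2 * poly q z = 0" using fq by simp
      then show "z \<in> {x. poly q x = 0}" using za by simp
    qed
    have c1: "card (\<xi> ` ({..<n} - {i0})) = n - 1"
      using inj i0 by (subst card_image) (auto intro: inj_on_subset)
    have "card (\<xi> ` ({..<n} - {i0})) \<le> card {x. poly q x = 0}"
      by (rule card_mono[OF poly_roots_finite[OF q0] sub])
    also have "\<dots> \<le> degree q" by (rule card_poly_roots_bound[OF q0])
    finally show False using dq n2 c1 by simp
  qed
  then show ?thesis using f0 unfolding rsquarefree_def by (metis le_Suc_eq le_zero_eq One_nat_def)
qed




definition Aexp :: "nat \<Rightarrow> nat \<Rightarrow> nat" where "Aexp N k = (\<Sum>m<k. (N + 1) ^ m)"

lemma Aexp_Suc: "Aexp N (Suc k) = Aexp N k + (N + 1) ^ k" by (simp add: Aexp_def)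

lemma Aexp_eq: "N * Aexp N k + 1 = (N + 1) ^ k"
  by (induction k) (auto simp: Aexp_def algebra_simps)

lemma Aexp_div: "N \<ge> 1 \<Longrightarrow> Aexp N k = ((N + 1) ^ k - 1) div N"
  using Aexp_eq[of N k] by (metis add_diff_cancel_right' nonzero_mult_div_cancel_left not_one_le_zero)

lemma Aexp_ge: "N \<ge> 1 \<Longrightarrow> k \<le> Aexp N k"
proof (induction k)
  case (Suc k)
  have "1 \<le> (N + 1) ^ k" by simp
  then show ?case using Suc unfolding Aexp_Suc by linarith
qed simp

context
  fixes av :: "'a::field \<Rightarrow> real" and f :: "'a poly" and n :: nat and \<xi> :: "nat \<Rightarrow> 'a" and p :: ereal
    and N :: nat and x0 :: "nat \<Rightarrow> 'a"
  assumes av: "is_abs_value av" and n2: "n \<ge> 2" and p1: "1 \<le> p"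
    and root: "root_vector f n \<xi>" and a0: "lead_coeff f \<noteq> 0"
    and N1: "N \<ge> 1" and d0: "distinct_on n x0" and P0: "Psi p n (Efun av p n \<xi> x0) \<le> 2"
begin

abbreviation "xs k \<equiv> (TW f n N ^^ k) x0"
abbreviation "tt k \<equiv> Efun av p n \<xi> (xs k)"
abbreviation "E0 \<equiv> Efun av p n \<xi> x0"
abbreviation "lam \<equiv> phiN p n N E0"
abbreviation "WW \<equiv> omegaN p n (N - 1) E0"
abbreviation "th \<equiv> psiN p n N E0"

lemma t00: "0 \<le> E0" by (simp add: E_nonneg[OF av n2 p1 root a0])

lemma lam01: "0 \<le> lam" "lam \<le> 1"
  using R2[OF n2 t00 P0, of N] by auto

lemma WW_R: "1 \<le> WW" "2 * E0 * WW < 1"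
  using R2[OF n2 t00 P0, of "N - 1"] by auto

lemma th_eq: "th = 1 - 2 * E0 * WW" by (simp add: psiN_def)

lemma th01: "0 < th" "th \<le> 1" using WW_R t00 unfolding th_eq by auto

lemma lamth: "WW - 1 = lam * th"
proof -
  have "lam = (WW - 1) / th" using N1 phi_Suc[of p n "N - 1" E0] unfolding th_eq by simp
  then show ?thesis using th01 by simp
qed

lemma invar: "distinct_on n (xs k) \<and> tt k \<le> lam ^ Aexp N k * E0"
proof (induction k)
  case 0 show ?case using d0 by (simp add: Aexp_def)
next
  case (Suc k)
  let ?mu = "lam ^ Aexp N k"
  have mu: "0 \<le> ?mu" "?mu \<le> 1" using lam01 by (auto simp: power_le_one)
  have dk: "distinct_on n (xs k)" and tk: "tt k \<le> ?mu * E0" using Suc by auto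
  have tk0: "0 \<le> tt k" by (simp add: E_nonneg[OF av n2 p1 root a0])
  have "?mu * E0 \<le> E0" using mu t00 by (simp add: mult_left_le_one_le)
  hence "tt k \<le> E0" using tk by linarith
  hence Pk: "Psi p n (tt k) \<le> 2" using Psi_mono[OF n2 tk0, where t="E0" and p=p] P0 by linarith
  have O: "distinct_on n (xs (Suc k)) \<and> tt (Suc k) \<le> phiN p n N (tt k) * tt k"
    using outer[OF av n2 p1 root a0 N1 dk Pk] by simp
  have ph: "phiN p n N (tt k) \<le> ?mu ^ N * lam"
    using phi_qh[OF n2 tk0 mu tk t00 P0] by (simp add: mult.commute)
  have ph0: "0 \<le> phiN p n N (tt k)" using R2[OF n2 tk0 Pk, of N] by simp
  have "tt (Suc k) \<le> phiN p n N (tt k) * tt k" using O by simp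
  also have "\<dots> \<le> (?mu ^ N * lam) * (?mu * E0)"
    using ph tk ph0 tk0 by (intro mult_mono) auto
  also have "\<dots> = lam ^ (N * Aexp N k + 1 + Aexp N k) * E0"
    by (simp add: power_add power_mult[symmetric] mult.commute mult.left_commute)
  also have "N * Aexp N k + 1 + Aexp N k = Aexp N (Suc k)" using Aexp_eq[of N k] by (simp add: Aexp_Suc)
  finally show ?case using O by simp
qed

lemma dist_k: "distinct_on n (xs k)" using invar by blast

lemma tk_le: "tt k \<le> lam ^ Aexp N k * E0" using invar by blast

lemma tk_nonneg: "0 \<le> tt k" by (simp add: E_nonneg[OF av n2 p1 root a0])

lemma tk_le0: "tt k \<le> E0"
proof -
  have "lam ^ Aexp N k * E0 \<le> E0" using lam01 t00 by (simp add: mult_left_le_one_le power_le_one)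
  then show ?thesis using tk_le[of k] by linarith
qed

lemma Pk: "Psi p n (tt k) \<le> 2"
  using Psi_mono[OF n2 tk_nonneg[of k] tk_le0[of k], where p=p] P0 by linarith

lemma step_k: "xs k \<in> DW f n N
    \<and> (\<forall>i<n. av (xs (Suc k) i - \<xi> i) \<le> (omegaN p n (N - 1) (tt k) - 1) * av (xs k i - \<xi> i))
    \<and> (\<forall>i<n. (1 - 2 * tt k * omegaN p n (N - 1) (tt k)) * dvec av n (xs k) i \<le> dvec av n (xs (Suc k)) i)"
  using outer[OF av n2 p1 root a0 N1 dist_k Pk, of k] by simp

lemma err1: "i < n \<Longrightarrow> av (xs (Suc k) i - \<xi> i) \<le> th * lam ^ ((N + 1) ^ k) * av (xs k i - \<xi> i)"
proof -
  assume i: "i < n"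
  let ?mu = "lam ^ Aexp N k"
  have mu: "0 \<le> ?mu" "?mu \<le> 1" using lam01 by (auto simp: power_le_one)
  have R: "omegaN p n (N - 1) (tt k) - 1 \<le> ?mu ^ Suc (N - 1) * (WW - 1)"
    by (rule R3[OF n2 tk_nonneg[of k] mu tk_le[of k] t00 P0])
  have "?mu ^ Suc (N - 1) * (WW - 1) = th * lam ^ (N * Aexp N k + 1)"
    using N1 lamth by (simp add: power_add power_mult[symmetric] mult.commute mult.left_commute)
  also have "N * Aexp N k + 1 = (N + 1) ^ k" by (rule Aexp_eq)
  finally have R': "omegaN p n (N - 1) (tt k) - 1 \<le> th * lam ^ ((N + 1) ^ k)" using R by simp
  have "av (xs (Suc k) i - \<xi> i) \<le> (omegaN p n (N - 1) (tt k) - 1) * av (xs k i - \<xi> i)"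
    using step_k i by blast
  also have "\<dots> \<le> th * lam ^ ((N + 1) ^ k) * av (xs k i - \<xi> i)"
    using R' av_nonneg[OF av] by (intro mult_right_mono) auto
  finally show ?thesis .
qed

lemma err2: "i < n \<Longrightarrow> av (xs k i - \<xi> i) \<le> th ^ k * lam ^ Aexp N k * av (x0 i - \<xi> i)"
proof (induction k)
  case 0 then show ?case by (simp add: Aexp_def)
next
  case (Suc k)
  have "av (xs (Suc k) i - \<xi> i) \<le> th * lam ^ ((N + 1) ^ k) * av (xs k i - \<xi> i)"
    by (rule err1[OF Suc.prems])
  also have "\<dots> \<le> th * lam ^ ((N + 1) ^ k) * (th ^ k * lam ^ Aexp N k * av (x0 i - \<xi> i))"
    using Suc th01 lam01 by (intro mult_left_mono) auto
  also have "\<dots> = th ^ Suc k * lam ^ Aexp N (Suc k) * av (x0 i - \<xi> i)"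
    by (simp add: Aexp_Suc power_add algebra_simps)
  finally show ?case .
qed


lemma xi_inj: "inj_on \<xi> {..<n}"
proof (rule inj_onI)
  fix i j assume ij: "i \<in> {..<n}" "j \<in> {..<n}" and eq: "\<xi> i = \<xi> j"
  show "i = j"
  proof (rule ccontr)
    assume ne: "i \<noteq> j"
    have q0: "0 < av (x0 i - x0 j)" using d0 ij ne by (intro av_pos[OF av]) (auto simp: distinct_on_def)
    have "av (x0 i - x0 j) \<le> av (x0 i - \<xi> i) + av (\<xi> i - x0 j)" by (rule av_diff_tri[OF av])
    also have "av (\<xi> i - x0 j) = av (x0 j - \<xi> j)" using eq av_commute[OF av] by simp
    also have "av (x0 i - \<xi> i) \<le> E0 * av (x0 j - x0 i)" using e_le[OF av n2 p1 root a0 d0, of j i] ij ne by auto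
    also have "av (x0 j - x0 i) = av (x0 i - x0 j)" by (rule av_commute[OF av])
    also have "av (x0 j - \<xi> j) \<le> E0 * av (x0 i - x0 j)" using e_le[OF av n2 p1 root a0 d0, of i j] ij ne by auto
    finally have "av (x0 i - x0 j) \<le> 2 * E0 * av (x0 i - x0 j)" by simp
    moreover have "2 * E0 < 1"
    proof -
      have "2 * E0 * 1 \<le> 2 * E0 * WW" using WW_R t00 by (intro mult_left_mono) auto
      then show ?thesis using WW_R by linarith
    qed
    ultimately show False using q0 mult_strict_right_mono[of "2 * E0" 1 "av (x0 i - x0 j)"] by linarith
  qed
qed

lemma conv: "conv_av av n (\<lambda>k. xs k) \<xi>"
  unfolding conv_av_def
proof (intro allI impI)
  fix i :: nat and e :: real assume i: "i < n" and e: "0 < e"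
  have b: "av (xs k i - \<xi> i) \<le> th ^ k * av (x0 i - \<xi> i)" for k
  proof -
    have "av (xs k i - \<xi> i) \<le> th ^ k * lam ^ Aexp N k * av (x0 i - \<xi> i)" by (rule err2[OF i])
    also have "\<dots> \<le> th ^ k * av (x0 i - \<xi> i)"
      using lam01 th01 av_nonneg[OF av, of "x0 i - \<xi> i"]
      by (simp add: mult_left_le_one_le power_le_one mult.assoc mult_left_mono)
    finally show ?thesis .
  qed
  show "\<exists>K. \<forall>k\<ge>K. av (xs k i - \<xi> i) < e"
  proof (cases "av (x0 i - \<xi> i) = 0")
    case True
    have "av (xs k i - \<xi> i) < e" for k using b[of k] e True by simp
    then show ?thesis by blast
  next
    case False
    have a: "0 < av (x0 i - \<xi> i)" using False av_nonneg[OF av, of "x0 i - \<xi> i"] by simp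
    have "av (x0 i - \<xi> i) \<le> E0 * dvec av n x0 i" by (rule e_le_d[OF av n2 p1 root a0 d0 i])
    hence "E0 \<noteq> 0" using a by auto
    hence E0p: "0 < E0" using t00 by simp
    have thl: "th < 1" using E0p WW_R unfolding th_eq by (simp add: mult_pos_pos)
    have "(\<lambda>k. th ^ k) \<longlonglongrightarrow> 0" using thl th01 by (intro LIMSEQ_power_zero) simp
    hence "eventually (\<lambda>k. th ^ k < e / av (x0 i - \<xi> i)) sequentially"
      using e a by (intro order_tendstoD(2)) auto
    then obtain K where K: "\<And>k. k \<ge> K \<Longrightarrow> th ^ k < e / av (x0 i - \<xi> i)"
      unfolding eventually_sequentially by blast
    show ?thesis
    proof (intro exI allI impI)
      fix k assume "K \<le> k"
      hence "th ^ k * av (x0 i - \<xi> i) < e" using K a by (simp add: pos_less_divide_eq)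
      then show "av (xs k i - \<xi> i) < e" using b[of k] by linarith
    qed
  qed
qed


lemma order_conv:
  assumes Plt: "Psi p n E0 < 2"
  shows "\<exists>C\<ge>0. \<forall>k. errmax av n (xs (Suc k)) \<xi> \<le> C * errmax av n (xs k) \<xi> ^ (N + 1)"
proof (cases "E0 = 0")
  case True
  have z0: "av (x0 i - \<xi> i) = 0" if i: "i < n" for i
    using e_le_d[OF av n2 p1 root a0 d0 i] True av_nonneg[OF av, of "x0 i - \<xi> i"] by simp
  have "errmax av n (xs (Suc k)) \<xi> \<le> 0" for k
  proof (rule errmax_le)
    fix i assume i: "i < n"
    show "av (xs (Suc k) i - \<xi> i) \<le> 0" using err2[OF i, of "Suc k"] z0[OF i] by simp
  qed simp
  then show ?thesis by (intro exI[of _ 0]) simp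
next
  case False
  hence E0p: "0 < E0" using t00 by simp
  have lamlt: "lam < 1" using phi_lt1[OF n2 t00 Plt, of "N - 1"] N1 by simp
  define c where "c = 2 * E0 * WW"
  have c01: "0 \<le> c" "c < 1" using WW_R t00 by (auto simp: c_def)
  have tkl: "tt k \<le> lam ^ k * E0" for k
  proof -
    have "lam ^ Aexp N k \<le> lam ^ k" using lam01 Aexp_ge[OF N1, of k] by (intro power_decreasing) auto
    hence "lam ^ Aexp N k * E0 \<le> lam ^ k * E0" using t00 by (rule mult_right_mono)
    then show ?thesis using tk_le[of k] by linarith
  qed
  have psik: "1 - c * lam ^ k \<le> 1 - 2 * tt k * omegaN p n (N - 1) (tt k)" for k
  proof -
    have "omegaN p n (N - 1) (tt k) - 1 \<le> 1 ^ Suc (N - 1) * (WW - 1)"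
      by (rule R3[OF n2 tk_nonneg[of k] _ _ _ t00 P0]) (use tk_le0[of k] in auto)
    hence W: "omegaN p n (N - 1) (tt k) \<le> WW" by simp
    have W1: "1 \<le> omegaN p n (N - 1) (tt k)" using R2[OF n2 tk_nonneg[of k] Pk[of k]] by simp
    have "2 * tt k * omegaN p n (N - 1) (tt k) \<le> 2 * (lam ^ k * E0) * WW"
      using tkl[of k] W tk_nonneg[of k] W1 by (intro mult_mono) auto
    also have "\<dots> = c * lam ^ k" by (simp add: c_def)
    finally show ?thesis by simp
  qed
  define S where "S k = (\<Sum>m<k. lam ^ m)" for k
  have dlow: "(1 - c) powr S k * dvec av n x0 i \<le> dvec av n (xs k) i" if i: "i < n" for k i
  proof (induction k)
    case 0 then show ?case using c01 by (simp add: S_def)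
  next
    case (Suc k)
    have lk: "0 \<le> lam ^ k" "lam ^ k \<le> 1" using lam01 by (auto simp: power_le_one)
    have pl: "(1 - c) powr (lam ^ k) \<le> 1 - c * lam ^ k" by (rule powr_le_lin[OF c01 lk])
    have pos: "0 \<le> (1 - c) powr (lam ^ k)" by simp
    have d0p: "0 \<le> (1 - c) powr S k * dvec av n x0 i" using dvec_pos[OF av n2 d0 i] c01 by simp
    have "(1 - c) powr S (Suc k) * dvec av n x0 i = (1 - c) powr (lam ^ k) * ((1 - c) powr S k * dvec av n x0 i)"
      by (simp add: S_def powr_add)
    also have "\<dots> \<le> (1 - 2 * tt k * omegaN p n (N - 1) (tt k)) * dvec av n (xs k) i"
      using pl psik[of k] Suc d0p pos R2[OF n2 tk_nonneg[of k] Pk[of k], of "N - 1"] by (intro mult_mono) auto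
    also have "\<dots> \<le> dvec av n (xs (Suc k)) i" using step_k[of k] i by auto
    finally show ?case .
  qed
  define \<delta> where "\<delta> = (1 - c) powr (1 / (1 - lam))"
  have \<delta>p: "0 < \<delta>" using c01 by (simp add: \<delta>_def)
  have Sle: "(1 - c) powr S k \<ge> \<delta>" for k
  proof -
    have "S k = (1 - lam ^ k) / (1 - lam)" using lamlt by (simp add: S_def sum_gp_strict)
    also have "\<dots> \<le> 1 / (1 - lam)" using lamlt lam01 by (simp add: divide_right_mono)
    finally have "S k \<le> 1 / (1 - lam)" .
    then show ?thesis unfolding \<delta>_def using c01 by (intro powr_mono') auto
  qed
  define D where "D = Min (dvec av n x0 ` {..<n})"
  have Dp: "0 < D" unfolding D_def using n2 dvec_pos[OF av n2 d0]
    by (subst Min_gr_iff) (auto simp: lessThan_empty_iff)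
  have Dle: "D \<le> dvec av n x0 i" if "i < n" for i unfolding D_def using that by (intro Min_le) auto
  define \<Delta> where "\<Delta> = \<delta> * D"
  have \<Delta>p: "0 < \<Delta>" using \<delta>p Dp by (simp add: \<Delta>_def)
  have dk: "\<Delta> \<le> dvec av n (xs k) i" if i: "i < n" for k i
  proof -
    have "\<Delta> \<le> (1 - c) powr S k * dvec av n x0 i"
      unfolding \<Delta>_def using Sle[of k] Dle[OF i] \<delta>p Dp by (intro mult_mono) auto
    also have "\<dots> \<le> dvec av n (xs k) i" by (rule dlow[OF i])
    finally show ?thesis .
  qed
  have tkb: "tt k \<le> n * errmax av n (xs k) \<xi> / \<Delta>" for k
  proof -
    have "tt k \<le> (\<Sum>i<n. Ei av n \<xi> (xs k) i)"
      unfolding Efun_Ei by (rule pnorm_le_sum[OF p1]) (rule Ei_nonneg[OF av n2 p1 root a0])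
    also have "\<dots> \<le> (\<Sum>i<n. errmax av n (xs k) \<xi> / \<Delta>)"
    proof (rule sum_mono)
      fix i assume "i \<in> {..<n}" hence i: "i < n" by simp
      show "Ei av n \<xi> (xs k) i \<le> errmax av n (xs k) \<xi> / \<Delta>"
        unfolding Ei_def using errmax_ge[OF i, of av "xs k" \<xi>] dk[OF i, of k] \<Delta>p av_nonneg[OF av]
          errmax_nonneg[of av n "xs k" \<xi>]
        by (intro frac_le) auto
    qed
    also have "\<dots> = n * errmax av n (xs k) \<xi> / \<Delta>" by simp
    finally show ?thesis .
  qed
  define C where "C = (WW - 1) * (n / (\<Delta> * E0)) ^ N"
  have C0: "0 \<le> C" using WW_R \<Delta>p E0p by (simp add: C_def)
  have main: "errmax av n (xs (Suc k)) \<xi> \<le> C * errmax av n (xs k) \<xi> ^ (N + 1)" for k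
  proof (rule errmax_le)
    let ?e = "errmax av n (xs k) \<xi>"
    have e0: "0 \<le> ?e" by (rule errmax_nonneg)
    show "0 \<le> C * ?e ^ (N + 1)" using C0 e0 by simp
    fix i assume i: "i < n"
    let ?mu = "tt k / E0"
    have mu: "0 \<le> ?mu" "?mu \<le> 1" using tk_nonneg[of k] tk_le0[of k] E0p by auto
    have R: "omegaN p n (N - 1) (tt k) - 1 \<le> ?mu ^ Suc (N - 1) * (WW - 1)"
      by (rule R3[OF n2 tk_nonneg[of k] mu _ t00 P0]) (use E0p in simp)
    have "?mu \<le> (n * ?e / \<Delta>) / E0" using tkb[of k] E0p by (intro divide_right_mono) auto
    hence mub: "?mu \<le> n * ?e / (\<Delta> * E0)" by simp
    have "av (xs (Suc k) i - \<xi> i) \<le> (omegaN p n (N - 1) (tt k) - 1) * av (xs k i - \<xi> i)"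
      using step_k[of k] i by blast
    also have "\<dots> \<le> (?mu ^ N * (WW - 1)) * ?e"
      using R N1 errmax_ge[OF i, of av "xs k" \<xi>] av_nonneg[OF av] mu WW_R
      by (intro mult_mono) auto
    also have "\<dots> \<le> ((n * ?e / (\<Delta> * E0)) ^ N * (WW - 1)) * ?e"
      using mub mu WW_R e0 by (intro mult_right_mono power_mono) auto
    also have "\<dots> = C * ?e ^ (N + 1)" by (simp add: C_def power_divide power_mult_distrib)
    finally show "av (xs (Suc k) i - \<xi> i) \<le> C * ?e ^ (N + 1)" .
  qed
  show ?thesis using C0 main by blast
qed

end


theorem theorem2p11:
  fixes av :: "'a::alg_closed_field \<Rightarrow> real"
    and f :: "'a poly" and n N :: nat and p :: ereal
    and \<xi> x0 :: "nat \<Rightarrow> 'a"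
  assumes av: "is_abs_value av"
    and deg: "degree f = n" and n2: "n \<ge> 2"
    and root: "root_vector f n \<xi>"
    and N1: "N \<ge> 1"
    and p1: "1 \<le> p"
    and dist: "\<forall>i<n. \<forall>j<n. i \<noteq> j \<longrightarrow> x0 i \<noteq> x0 j"
    and init: "Psi p n (Efun av p n \<xi> x0) \<le> 2"
  shows "rsquarefree f
    \<and> (\<forall>k. (TW f n N ^^ k) x0 \<in> DW f n N)
    \<and> conv_av av n (\<lambda>k. (TW f n N ^^ k) x0) \<xi>
    \<and> (\<forall>k. \<forall>i<n.
          av ((TW f n N ^^ Suc k) x0 i - \<xi> i)
            \<le> psiN p n N (Efun av p n \<xi> x0) * phiN p n N (Efun av p n \<xi> x0) ^ ((N + 1) ^ k)
              * av ((TW f n N ^^ k) x0 i - \<xi> i))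
    \<and> (\<forall>k. \<forall>i<n.
          av ((TW f n N ^^ k) x0 i - \<xi> i)
            \<le> psiN p n N (Efun av p n \<xi> x0) ^ k
              * phiN p n N (Efun av p n \<xi> x0) ^ (((N + 1) ^ k - 1) div N)
              * av (x0 i - \<xi> i))
    \<and> (Psi p n (Efun av p n \<xi> x0) < 2 \<longrightarrow>
          conv_order av n (\<lambda>k. (TW f n N ^^ k) x0) \<xi> (N + 1))"
  proof -
  have a0: "lead_coeff f \<noteq> 0" using deg n2 by auto
  have d0: "distinct_on n x0" using dist by (simp add: distinct_on_def)
  note L = av n2 p1 root a0 N1 d0 init
  have c1: "rsquarefree f" by (rule rsq[OF root a0 deg n2 xi_inj[OF L]])
  have c2: "\<forall>k. (TW f n N ^^ k) x0 \<in> DW f n N" using step_k[OF L] by blast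
  have c3: "conv_av av n (\<lambda>k. (TW f n N ^^ k) x0) \<xi>" by (rule conv[OF L])
  have c4: "\<forall>k. \<forall>i<n.
          av ((TW f n N ^^ Suc k) x0 i - \<xi> i)
            \<le> psiN p n N (Efun av p n \<xi> x0) * phiN p n N (Efun av p n \<xi> x0) ^ ((N + 1) ^ k)
              * av ((TW f n N ^^ k) x0 i - \<xi> i)"
    using err1[OF L] by blast
  have c5: "\<forall>k. \<forall>i<n.
          av ((TW f n N ^^ k) x0 i - \<xi> i)
            \<le> psiN p n N (Efun av p n \<xi> x0) ^ k
              * phiN p n N (Efun av p n \<xi> x0) ^ (((N + 1) ^ k - 1) div N)
              * av (x0 i - \<xi> i)"
    using err2[OF L] Aexp_div[OF N1] by metis
  have c6: "Psi p n (Efun av p n \<xi> x0) < 2 \<longrightarrow>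
          conv_order av n (\<lambda>k. (TW f n N ^^ k) x0) \<xi> (N + 1)"
    using conv[OF L] order_conv[OF L] unfolding conv_order_def by blast
  show ?thesis using c1 c2 c3 c4 c5 c6 by blast
qed

end
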